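(* In the natural Hopf algebra $\mathcal N_{E^\bullet}=\mathbb K[t_2,t_3,\dots]$ (with $t_1=1$), the antipode satisfies, for every $n\ge2$, $$nS(t_n)=\sum_{k=1}^{n-1}(-1)^k(n+k-1)_k\,B_{n-1,k}(t_2,t_3,\dots)=\Big[\tfrac{x^{n-1}}{(n-1)!}\Big]\Big(1+\sum_{j\ge1}t_{j+1}\tfrac{x^j}{j!}\Big)^{-n},$$ where $(m)_k=m(m-1)\cdots(m-k+1)$. Equivalently, $nS(t_n)=\big[\tfrac{x^{n-1}}{(n-1)!}\big]\big(E^{\bullet I}(x)/x\big)^{-n}$, with $E^{\bullet I}(x)=x+\sum_{n\ge2}nt_n\frac{x^n}{n!}$.
   Context: $E^\bullet$ is the species of pointed sets: $E^\bullet[U]=\{(U,v):v\in U\}$ for $U\ne\emptyset$. It is a set operad with product $\eta(\{(B,v_B)\}_{B\in\pi},(\pi,B_0))=(U,v_{B_0})$, where $B_0\in\pi$ is the distinguished block. Types are identified with the cardinality $n$, with generator $t_n$ and $t_1=1$. The coproduct of the natural Hopf algebra is given by $n\Delta(t_n)=\sum_{k=1}^nB_{n,k}(0,2t_2,3t_3,\dots)\otimes kt_k$, and $S$ is its antipode. $B_{n,k}(x_1,x_2,\dots)=\sum_{\pi\in\Pi[n],|\pi|=k}\prod_{B\in\pi}x_{|B|}$ is the partial Bell polynomial, and $B_{n-1,k}(t_2,t_3,\dots)$ means $B_{n-1,k}(y_1,y_2,\dots)$ with $y_j=t_{j+1}$. $[x^m/m!]f$ denotes $m!$ times the coefficient of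 $x^m$ in $f$. *)

theory Defs
  imports "HOL-Library.Poly_Mapping" "HOL-Library.Product_Plus" "HOL-Library.Disjoint_Sets"
          "HOL-Computational_Algebra.Formal_Power_Series"
begin

text \<open>A polynomial is a finitely supported map from monomials (exponent vectors) to K;
  the variable with index i stands for t_(i+2), so the type is exactly K[t_2,t_3,...].\<close>

type_synonym 'a NE = "(nat \<Rightarrow>\<^sub>0 nat) \<Rightarrow>\<^sub>0 'a"

text \<open>N tensor N, identified with polynomials in two families of variables
  (a monomial is a pair (left monomial, right monomial)).\<close>
type_synonym 'a NE2 = "((nat \<Rightarrow>\<^sub>0 nat) \<times> (nat \<Rightarrow>\<^sub>0 nat)) \<Rightarrow>\<^sub>0 'a"

definition Cst :: "'a::zero \<Rightarrow> ('b::zero \<Rightarrow>\<^sub>0 'a)" where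
  "Cst c = Poly_Mapping.single 0 c"

definition tgen :: "nat \<Rightarrow> 'a::comm_ring_1 NE" where
  "tgen n = (if n = 1 then 1
             else if 2 \<le> n then Poly_Mapping.single (Poly_Mapping.single (n - 2) 1) 1
             else 0)"

definition bell_partial :: "nat \<Rightarrow> nat \<Rightarrow> (nat \<Rightarrow> 'b::comm_semiring_1) \<Rightarrow> 'b" where
  "bell_partial n k x =
     (\<Sum>P\<in>{P. partition_on {1..n} P \<and> card P = k}. \<Prod>B\<in>P. x (card B))"

definition ffall :: "nat \<Rightarrow> nat \<Rightarrow> nat" where
  "ffall m k = (\<Prod>i<k. m - i)"

definition tens :: "'a::comm_ring_1 NE \<Rightarrow> 'a NE \<Rightarrow> 'a NE2" where
  "tens p q = (\<Sum>a\<in>Poly_Mapping.keys p. \<Sum>b\<in>Poly_Mapping.keys q. Poly_Mapping.single (a, b) (Poly_Mapping.lookup p a * Poly_Mapping.lookup q b))"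

definition Delta_gen :: "nat \<Rightarrow> 'a::field_char_0 NE2" where
  "Delta_gen n = Cst (1 / of_nat n) *
     (\<Sum>k = 1..n. tens (bell_partial n k (\<lambda>j. Cst (of_nat j) * tgen j)) (Cst (of_nat k) * tgen k))"

definition Delta :: "'a::field_char_0 NE \<Rightarrow> 'a NE2" where
  "Delta p = (\<Sum>m\<in>Poly_Mapping.keys p. Cst (Poly_Mapping.lookup p m) * (\<Prod>i\<in>Poly_Mapping.keys m. Delta_gen (i + 2) ^ Poly_Mapping.lookup m i))"

definition counit :: "'a::zero NE \<Rightarrow> 'a" where
  "counit p = Poly_Mapping.lookup p 0"

text \<open>mu \<circ> (S \<otimes> T) applied to an element of N \<otimes> N (for linear S, T).\<close>
definition conv_app :: "('a::comm_ring_1 NE \<Rightarrow> 'a NE) \<Rightarrow> ('a NE \<Rightarrow> 'a NE) \<Rightarrow> 'a NE2 \<Rightarrow> 'a NE" where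
  "conv_app S T q = (\<Sum>ab\<in>Poly_Mapping.keys q. Cst (Poly_Mapping.lookup q ab) * S (Poly_Mapping.single (fst ab) 1)
                                    * T (Poly_Mapping.single (snd ab) 1))"

definition is_linear_NE :: "('a::comm_ring_1 NE \<Rightarrow> 'a NE) \<Rightarrow> bool" where
  "is_linear_NE S \<longleftrightarrow> (\<forall>p. S p = (\<Sum>m\<in>Poly_Mapping.keys p. Cst (Poly_Mapping.lookup p m) * S (Poly_Mapping.single m 1)))"

definition is_antipode :: "('a::field_char_0 NE \<Rightarrow> 'a NE) \<Rightarrow> bool" where
  "is_antipode S \<longleftrightarrow> is_linear_NE S
     \<and> (\<forall>p. conv_app S id (Delta p) = Cst (counit p))
     \<and> (\<forall>p. conv_app id S (Delta p) = Cst (counit p))"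

definition Fser :: "'a::field_char_0 NE fps" where
  "Fser = Abs_fps (\<lambda>j. if j = 0 then 1 else Cst (1 / fact j) * tgen (j + 1))"

definition EI :: "'a::field_char_0 NE fps" where
  "EI = Abs_fps (\<lambda>m. if m = 1 then 1 else if 2 \<le> m then Cst (of_nat m / fact m) * tgen m else 0)"

end

theory Submission
  imports Defs
begin



definition BP :: "'c set \<Rightarrow> nat \<Rightarrow> (nat \<Rightarrow> 'b::comm_semiring_1) \<Rightarrow> 'b" where
  "BP A k x = (\<Sum>P\<in>{P. partition_on A P \<and> card P = k}. \<Prod>B\<in>P. x (card B))"

lemma bell_BP: "bell_partial n k x = BP {1..n} k x"
  by (simp add: bell_partial_def BP_def)

lemma part_image:
  assumes P: "partition_on A P" and h: "inj_on h A"
  shows "partition_on (h ` A) ((`) h ` P)" "card ((`) h ` P) = card P"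
    "(\<Prod>B\<in>(`) h ` P. x (card B)) = (\<Prod>B\<in>P. x (card B))"
proof -
  have ne: "{} \<notin> P" using P partition_onD3 by blast
  have sub: "\<And>B. B \<in> P \<Longrightarrow> B \<subseteq> A" using P partition_onD1 by blast
  have "(`) h ` P - {{}} = (`) h ` P" using ne by auto
  then show "partition_on (h ` A) ((`) h ` P)" using partition_on_inj_image[OF P h] by simp
  have inj: "inj_on ((`) h) P"
    by (rule inj_on_subset[OF inj_on_image_Pow[OF h]]) (use sub in auto)
  show "card ((`) h ` P) = card P" using card_image[OF inj] .
  have "(\<Prod>B\<in>(`) h ` P. x (card B)) = (\<Prod>B\<in>P. x (card (h ` B)))"
    using prod.reindex[OF inj] by simp
  also have "\<dots> = (\<Prod>B\<in>P. x (card B))"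
    by (rule prod.cong[OF refl]) (metis card_image h inj_on_subset sub)
  finally show "(\<Prod>B\<in>(`) h ` P. x (card B)) = (\<Prod>B\<in>P. x (card B))" .
qed

lemma BP_bij:
  assumes h: "bij_betw h A A'"
  shows "BP A k x = BP A' k x"
proof -
  let ?g = "inv_into A h"
  have hi: "inj_on h A" and hA: "h ` A = A'" using h by (auto simp: bij_betw_def)
  have g: "bij_betw ?g A' A" using bij_betw_inv_into[OF h] .
  have gi: "inj_on ?g A'" and gA: "?g ` A' = A" using g by (auto simp: bij_betw_def)
  show ?thesis unfolding BP_def
  proof (rule sum.reindex_bij_witness[where i="\<lambda>P. (`) ?g ` P" and j="\<lambda>P. (`) h ` P"])
    fix P assume "P \<in> {P. partition_on A' P \<and> card P = k}"
    then have P: "partition_on A' P" "card P = k" by auto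
    have sub: "\<And>B. B \<in> P \<Longrightarrow> B \<subseteq> A'" using P partition_onD1 by blast
    show "(`) h ` (`) ?g ` P = P"
    proof -
      have "\<And>B. B \<in> P \<Longrightarrow> h ` ?g ` B = B"
        using sub hA by (simp add: image_image f_inv_into_f subset_eq cong: image_cong)
      then show ?thesis by (simp add: image_image)
    qed
    show "(`) ?g ` P \<in> {P. partition_on A P \<and> card P = k}"
      using part_image[OF P(1) gi] gA P by auto
  next
    fix P assume "P \<in> {P. partition_on A P \<and> card P = k}"
    then have P: "partition_on A P" "card P = k" by auto
    have sub: "\<And>B. B \<in> P \<Longrightarrow> B \<subseteq> A" using P partition_onD1 by blast
    have "\<And>B. B \<in> P \<Longrightarrow> ?g ` h ` B = B"
      using sub hi by (metis inv_into_image_cancel)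
    then show "(`) ?g ` (`) h ` P = P" by (simp add: image_image)
    show "(`) h ` P \<in> {P. partition_on A' P \<and> card P = k}"
      using part_image[OF P(1) hi] hA P by auto
    show "(\<Prod>B\<in>(`) h ` P. x (card B)) = (\<Prod>B\<in>P. x (card B))"
      using part_image[OF P(1) hi] by simp
  qed
qed

lemma BP_card:
  assumes "finite A" shows "BP A k x = bell_partial (card A) k x"
proof -
  have "finite {1..card A}" "card {1..card A} = card A" by auto
  then obtain h where "bij_betw h A {1..card A}"
    using assms by (metis finite_same_card_bij)
  then show ?thesis by (simp add: BP_bij bell_BP)
qed




lemma BP_insert:
  assumes fin: "finite A" and a: "a \<notin> A"
  shows "BP (insert a A) (Suc k) x = (\<Sum>T\<in>Pow A. x (Suc (card T)) * BP (A - T) k x)"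
proof -
  let ?S = "Sigma (Pow A) (\<lambda>T. {Q. partition_on (A - T) Q \<and> card Q = k})"
  let ?L = "{P. partition_on (insert a A) P \<and> card P = Suc k}"
  define blk where "blk P = (THE B. B \<in> P \<and> a \<in> B)" for P :: "'a set set"
  have blk: "blk P \<in> P \<and> a \<in> blk P" if "P \<in> ?L" for P
  proof -
    from that have P: "partition_on (insert a A) P" by auto
    then obtain B where B: "B \<in> P" "a \<in> B" using partition_onD1 by blast
    have uniq: "\<And>C. C \<in> P \<Longrightarrow> a \<in> C \<Longrightarrow> C = B"
    proof -
      fix C assume C: "C \<in> P" "a \<in> C"
      show "C = B" using disjointD[OF partition_onD2[OF P] C(1) B(1)] C(2) B(2) by blast
    qed
    have "blk P = B" unfolding blk_def
    proof (rule the_equality)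
      show "B \<in> P \<and> a \<in> B" using B by simp
    qed (use uniq in blast)
    then show ?thesis using B by simp
  qed
  have blkI: "blk (insert (insert a T) Q) = insert a T" if "a \<notin> \<Union>Q" for T Q
    unfolding blk_def
  proof (rule the_equality)
    fix C assume "C \<in> insert (insert a T) Q \<and> a \<in> C"
    then show "C = insert a T" using that by blast
  qed simp
  have rhs: "(\<Sum>T\<in>Pow A. x (Suc (card T)) * BP (A - T) k x)
      = (\<Sum>(T,Q)\<in>?S. x (Suc (card T)) * (\<Prod>B\<in>Q. x (card B)))"
  proof -
    have fins: "finite {Q. partition_on (A - T) Q \<and> card Q = k}" for T
      by (rule finite_subset[OF _ finitely_many_partition_on[of "A - T"]]) (use fin in auto)
    show ?thesis
    unfolding BP_def sum_distrib_left
    by (rule sum.Sigma) (use fin fins in auto)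
  qed
  have "(\<Sum>(T,Q)\<in>?S. x (Suc (card T)) * (\<Prod>B\<in>Q. x (card B))) = BP (insert a A) (Suc k) x"
    unfolding BP_def
  proof (rule sum.reindex_bij_witness[where i="\<lambda>P. (blk P - {a}, P - {blk P})"
        and j="\<lambda>(T,Q). insert (insert a T) Q"])
    fix P assume PL: "P \<in> ?L"
    have P: "partition_on (insert a A) P" "card P = Suc k" using PL by auto
    have b: "blk P \<in> P" "a \<in> blk P" using blk[OF PL] by auto
    show "(\<lambda>(T, Q). insert (insert a T) Q) (blk P - {a}, P - {blk P}) = P"
    proof -
      have "insert a (blk P - {a}) = blk P" using b by auto
      then show ?thesis using b by (simp add: insert_absorb)
    qed
    have sub: "blk P \<subseteq> insert a A" using P(1) b partition_onD1 by blast
    have Pe: "P = insert (blk P) (P - {blk P})" using b by auto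
    have dj: "disjnt (blk P) (\<Union>(P - {blk P}))"
      unfolding disjnt_def using disjointD[OF partition_onD2[OF P(1)] b(1)] by blast
    have "partition_on (insert a A - blk P) (P - {blk P})"
    proof -
      have "partition_on (insert a A) (insert (blk P) (P - {blk P}))" using P(1) Pe by simp
      then show ?thesis using partition_on_insert[OF dj] by blast
    qed
    moreover have "insert a A - blk P = A - (blk P - {a})" using a b by auto
    moreover have "card (P - {blk P}) = k" using P b
      by (simp add: card_Diff_singleton)
    ultimately show "(blk P - {a}, P - {blk P}) \<in> ?S" using sub by auto
  next
    fix TQ assume TQ: "TQ \<in> ?S"
    obtain T Q where TQe: "TQ = (T, Q)" by (cases TQ)
    have T: "T \<subseteq> A" and Q: "partition_on (A - T) Q" "card Q = k" using TQ TQe by auto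
    have aQ: "a \<notin> \<Union>Q" using partition_onD1[OF Q(1)] a by auto
    have nin: "insert a T \<notin> Q" using aQ by auto
    have finQ: "finite Q" using finite_elements[OF _ Q(1)] fin by auto
    show "(\<lambda>P. (blk P - {a}, P - {blk P})) ((\<lambda>(T, Q). insert (insert a T) Q) TQ) = TQ"
      using TQe blkI[OF aQ] nin a T by auto
    have dj: "disjnt (insert a T) (\<Union>Q)"
      using partition_onD1[OF Q(1)] a T by (auto simp: disjnt_def)
    have "partition_on (insert a A) (insert (insert a T) Q)"
    proof -
      have e: "insert a A - insert a T = A - T" using a by auto
      show ?thesis by (subst partition_on_insert[OF dj]) (use Q(1) T e in auto)
    qed
    moreover have "card (insert (insert a T) Q) = Suc k" using nin finQ Q(2) by simp
    ultimately show "(\<lambda>(T, Q). insert (insert a T) Q) TQ \<in> ?L" using TQe by auto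
    have finT: "finite T" using T fin finite_subset by auto
    have "(\<Prod>B\<in>insert (insert a T) Q. x (card B)) = x (card (insert a T)) * (\<Prod>B\<in>Q. x (card B))"
      using nin finQ by simp
    also have "card (insert a T) = Suc (card T)"
    proof -
      have "a \<notin> T" using a T by blast
      then show ?thesis using finT by simp
    qed
    finally show "(\<Prod>B\<in>(\<lambda>(T, Q). insert (insert a T) Q) TQ. x (card B)) =
       (\<lambda>(T, Q). x (Suc (card T)) * (\<Prod>B\<in>Q. x (card B))) TQ" using TQe by simp
  qed
  then show ?thesis using rhs by simp
qed

lemma sum_Pow_card:
  assumes "finite A"
  shows "(\<Sum>T\<in>Pow A. g (card T)) = (\<Sum>i\<le>card A. of_nat (card A choose i) * (g i :: 'b::comm_semiring_1))"
proof -
  have e: "Pow A = (\<Union>i\<in>{..card A}. {T. T \<subseteq> A \<and> card T = i})"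
    using assms by (auto intro: card_mono)
  have "(\<Sum>T\<in>Pow A. g (card T)) = (\<Sum>i\<le>card A. \<Sum>T\<in>{T. T \<subseteq> A \<and> card T = i}. g (card T))"
    unfolding e using assms
    by (subst sum.UNION_disjoint) auto
  also have "\<dots> = (\<Sum>i\<le>card A. of_nat (card A choose i) * g i)"
    using assms by (intro sum.cong refl) (simp add: n_subsets)
  finally show ?thesis .
qed

lemma bell_rec:
  "bell_partial (Suc n) (Suc k) x
     = (\<Sum>i\<le>n. of_nat (n choose i) * x (Suc i) * bell_partial (n - i) k x)"
proof -
  have "bell_partial (Suc n) (Suc k) x = BP (insert (Suc n) {1..n}) (Suc k) x"
    by (simp add: bell_BP atLeastAtMostSuc_conv)
  also have "\<dots> = (\<Sum>T\<in>Pow {1..n}. x (Suc (card T)) * BP ({1..n} - T) k x)"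
    by (rule BP_insert) auto
  also have "\<dots> = (\<Sum>T\<in>Pow {1..n}. x (Suc (card T)) * bell_partial (n - card T) k x)"
    by (intro sum.cong refl) (auto simp: BP_card card_Diff_subset finite_subset)
  also have "\<dots> = (\<Sum>i\<le>n. of_nat (n choose i) * (x (Suc i) * bell_partial (n - i) k x))"
    using sum_Pow_card[of "{1..n}" "\<lambda>c. x (Suc c) * bell_partial (n - c) k x"] by simp
  finally show ?thesis by (simp add: mult.assoc)
qed

lemma bell_0: "bell_partial 0 k x = (if k = 0 then 1 else 0)"
proof -
  have "{P. partition_on {1..0::nat} P \<and> card P = k} = (if k = 0 then {{}} else {})"
    by (auto simp: partition_on_empty)
  then show ?thesis by (simp add: bell_partial_def)
qed

lemma bell_Suc_0: "bell_partial (Suc n) 0 x = 0"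
proof -
  have "{P. partition_on {1..Suc n} P \<and> card P = 0} = {}"
    using finite_elements[of "{1..Suc n}"] partition_onD1[of "{1..Suc n}"]
    by fastforce
  then show ?thesis by (simp only: bell_partial_def sum.empty)
qed




lemma fact_deriv_nth:
  fixes F :: "'b::comm_ring_1 fps"
  shows "of_nat (fact (Suc m)) * fps_nth F (Suc m) = of_nat (fact m) * fps_nth (fps_deriv F) m"
  by (simp add: fps_deriv_nth algebra_simps)

lemma ifact_deriv:
  fixes ifact :: "nat \<Rightarrow> 'b::comm_ring_1"
  assumes ifa: "\<And>m. ifact m * of_nat (fact m) = 1"
  shows "of_nat (fact i) * fps_nth (fps_deriv (Abs_fps (\<lambda>j. if j = 0 then 0 else ifact j * x j))) i = x (Suc i)"
proof -
  have e: "ifact (Suc i) * (of_nat (fact i) + of_nat i * of_nat (fact i)) = 1"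
    using ifa[of "Suc i"] by (simp add: algebra_simps)
  have "of_nat (fact i) * fps_nth (fps_deriv (Abs_fps (\<lambda>j. if j = 0 then 0 else ifact j * x j))) i
      = ifact (Suc i) * (of_nat (fact i) + of_nat i * of_nat (fact i)) * x (Suc i)"
    by (simp add: fps_deriv_nth algebra_simps)
  then show ?thesis using e by simp
qed

lemma bell_egf:
  fixes x :: "nat \<Rightarrow> 'b::comm_ring_1" and ifact :: "nat \<Rightarrow> 'b"
  assumes ifa: "\<And>m. ifact m * of_nat (fact m) = 1"
  shows "of_nat (fact n) * fps_nth (Abs_fps (\<lambda>j. if j = 0 then 0 else ifact j * x j) ^ k) n
         = of_nat (fact k) * bell_partial n k x"
proof (induction k arbitrary: n)
  case 0
  then show ?case by (cases n) (simp_all add: bell_0 bell_Suc_0)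
next
  case (Suc k)
  define A where "A = Abs_fps (\<lambda>j. if j = 0 then 0 else ifact j * x j)"
  have IH: "of_nat (fact n) * fps_nth (A ^ k) n = of_nat (fact k) * bell_partial n k x" for n
    using Suc.IH A_def by simp
  show ?case
  proof (cases n)
    case 0
    then show ?thesis by (simp add: bell_0 A_def)
  next
    case (Suc m)
    have "of_nat (fact (Suc m)) * fps_nth (A ^ Suc k) (Suc m) = of_nat (fact m) * fps_nth (fps_deriv (A ^ Suc k)) m"
      by (rule fact_deriv_nth)
    also have "fps_deriv (A ^ Suc k) = fps_const (of_nat (Suc k)) * (fps_deriv A * A ^ k)"
      by (simp only: fps_deriv_power diff_Suc_1 mult.assoc)
    also have "of_nat (fact m) * fps_nth (fps_const (of_nat (Suc k)) * (fps_deriv A * A ^ k)) m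
       = of_nat (Suc k) * (\<Sum>i=0..m. of_nat (fact m) * (fps_nth (fps_deriv A) i * fps_nth (A ^ k) (m - i)))"
      unfolding fps_mult_left_const_nth unfolding fps_mult_nth sum_distrib_left by (simp only: mult.left_commute)
    also have "(\<Sum>i=0..m. of_nat (fact m) * (fps_nth (fps_deriv A) i * fps_nth (A ^ k) (m - i)))
       = (\<Sum>i=0..m. of_nat (m choose i) * (of_nat (fact i) * fps_nth (fps_deriv A) i)
             * (of_nat (fact (m - i)) * fps_nth (A ^ k) (m - i)))"
    proof (rule sum.cong[OF refl])
      fix i assume "i \<in> {0..m}"
      then have "fact i * fact (m - i) * (m choose i) = fact m" by (simp add: binomial_fact_lemma)
      then have "(of_nat (fact m) :: 'b) = of_nat (fact i) * of_nat (fact (m - i)) * of_nat (m choose i)"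
        by (metis of_nat_mult)
      then show "of_nat (fact m) * (fps_nth (fps_deriv A) i * fps_nth (A ^ k) (m - i)) =
          of_nat (m choose i) * (of_nat (fact i) * fps_nth (fps_deriv A) i) * (of_nat (fact (m - i)) * fps_nth (A ^ k) (m - i))"
        by (simp add: algebra_simps)
    qed
    also have "\<dots> = (\<Sum>i=0..m. of_nat (m choose i) * x (Suc i) * (of_nat (fact k) * bell_partial (m - i) k x))"
      using ifact_deriv[OF ifa, of _ x] IH by (simp add: A_def)
    also have "of_nat (Suc k) * \<dots> = of_nat (fact (Suc k)) * (\<Sum>i\<le>m. of_nat (m choose i) * x (Suc i) * bell_partial (m - i) k x)"
      by (simp add: sum_distrib_left atLeast0AtMost algebra_simps)
    also have "\<dots> = of_nat (fact (Suc k)) * bell_partial (Suc m) (Suc k) x"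
      by (simp add: bell_rec)
    finally show ?thesis using Suc A_def by simp
  qed
qed




lemma bell_1_1: "bell_partial (Suc 0) (Suc 0) x = x (Suc 0)"
  using bell_rec[of 0 0 x] by (simp add: bell_0)

locale lagr =
  fixes ifact :: "nat \<Rightarrow> 'b::comm_ring_1"
  assumes ifa: "\<And>m. ifact m * of_nat (fact m) = 1"
begin

lemma tf: assumes "0 < j" "of_nat j * c = 0" shows "(c::'b) = 0"
proof -
  have f: "fact j = fact (j - 1) * (j::nat)" using assms(1)
    by (cases j) auto
  have "c = (ifact j * of_nat (fact j)) * c" using ifa by simp
  also have "\<dots> = ifact j * of_nat (fact (j - 1)) * (of_nat j * c)"
    by (subst f) (simp add: algebra_simps)
  finally show ?thesis using assms by simp
qed

lemma ifact1: "ifact 1 = 1" using ifa[of 1] by simp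

lemma bell_zero:
  fixes x :: "nat \<Rightarrow> 'b"
  assumes "n < k" shows "bell_partial n k x = 0"
proof -
  define A where "A = Abs_fps (\<lambda>j. if j = 0 then 0 else ifact j * x j)"
  have "fps_nth A 0 = 0" by (simp add: A_def)
  then have "fps_nth (A ^ k) n = 0" using startsby_zero_power_prefix assms by blast
  then have "of_nat (fact k) * bell_partial n k x = 0"
    using bell_egf[OF ifa, of n x k] by (simp add: A_def)
  then show ?thesis using tf[of "fact k"] by simp
qed

definition EE :: "(nat \<Rightarrow> 'b) \<Rightarrow> 'b fps" where
  "EE t = Abs_fps (\<lambda>j. if j = 0 then 0 else ifact j * (of_nat j * t j))"

lemma comp_coeffs:
  fixes t s :: "nat \<Rightarrow> 'b"
  assumes t1: "t 1 = 1" and s1: "s 1 = 1"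
  and rec: "\<And>m. 2 \<le> m \<Longrightarrow> (\<Sum>k=1..m. bell_partial m k (\<lambda>j. of_nat j * t j) * of_nat k * s k) = 0"
  and mn: "m \<le> n"
  shows "fps_nth (\<Sum>k=0..n. fps_const (ifact k * of_nat k * s k) * EE t ^ k) m = (if m = 1 then 1 else 0)"
proof -
  define f where "f = (\<lambda>j. of_nat j * t j)"
  have key: "of_nat (fact m) * fps_nth (EE t ^ k) m = of_nat (fact k) * bell_partial m k f" for k
    unfolding EE_def f_def by (rule bell_egf[OF ifa])
  let ?L = "fps_nth (\<Sum>k=0..n. fps_const (ifact k * of_nat k * s k) * EE t ^ k) m"
  have "of_nat (fact m) * ?L = (\<Sum>k=0..n. ifact k * of_nat k * s k * (of_nat (fact m) * fps_nth (EE t ^ k) m))"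
    by (simp add: fps_sum_nth sum_distrib_left algebra_simps)
  also have "\<dots> = (\<Sum>k=0..n. (ifact k * of_nat (fact k)) * (bell_partial m k f * of_nat k * s k))"
    by (simp add: key algebra_simps)
  also have "\<dots> = (\<Sum>k=0..n. bell_partial m k f * of_nat k * s k)"
    by (simp add: ifa)
  also have "\<dots> = (\<Sum>k=1..m. bell_partial m k f * of_nat k * s k)"
  proof (rule sum.mono_neutral_right)
    show "\<forall>i\<in>{0..n} - {1..m}. bell_partial m i f * of_nat i * s i = 0"
    proof
      fix i assume "i \<in> {0..n} - {1..m}"
      then have "i = 0 \<or> m < i" by auto
      then show "bell_partial m i f * of_nat i * s i = 0"
        using bell_zero[of m i f] by auto
    qed
  qed (use mn in auto)
  also have "\<dots> = of_nat (fact m) * (if m = 1 then 1 else 0)"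
  proof -
    consider "m = 0" | "m = 1" | "2 \<le> m" by linarith
    then show ?thesis
    proof cases
      case 1 then show ?thesis by simp
    next
      case 2 then show ?thesis using bell_1_1[of f] t1 s1 by (simp add: f_def)
    next
      case 3 then show ?thesis using rec[of m] by (simp add: f_def)
    qed
  qed
  finally have e: "of_nat (fact m) * ?L = of_nat (fact m) * (if m = 1 then 1 else 0)" .
  have "?L = ifact m * (of_nat (fact m) * ?L)" by (simp only: mult.assoc[symmetric] ifa mult_1_left)
  also have "\<dots> = (if m = 1 then 1 else 0)" using e ifa[of m] ifact1 by (simp add: algebra_simps)
  finally show ?thesis .
qed

lemma Cj:
  fixes V F E :: "'b fps"
  assumes V: "V * F = 1" and EF: "E = F * fps_X"
  shows "fps_nth (V ^ (j + 1) * fps_deriv E) j = (if j = 0 then 1 else 0)"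
proof -
  have dE: "fps_deriv E = F + fps_X * fps_deriv F"
    by (simp add: EF mult.commute)
  have "V ^ (j + 1) * F = V ^ j * (V * F)" by (simp add: power_Suc2 mult.assoc)
  then have VF: "V ^ (j + 1) * F = V ^ j" using V by simp
  have e1: "V ^ (j + 1) * fps_deriv E = V ^ j + fps_X * (V ^ (j + 1) * fps_deriv F)"
    by (simp only: dE distrib_left VF) (simp add: algebra_simps)
  show ?thesis
  proof (cases j)
    case 0
    have "fps_nth V 0 * fps_nth F 0 = 1" using arg_cong[OF V, of "\<lambda>G. fps_nth G 0"] by simp
    then show ?thesis using e1 0 by simp
  next
    case (Suc i)
    have h0: "V * fps_deriv F + fps_deriv V * F = 0"
      using arg_cong[OF V, of fps_deriv] by simp
    have Vd: "fps_deriv V = - (V * V * fps_deriv F)"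
    proof -
      have "fps_deriv V = fps_deriv V * (V * F)" by (simp add: V)
      also have "\<dots> = V * (fps_deriv V * F)" by (simp add: algebra_simps)
      also have "fps_deriv V * F = - (V * fps_deriv F)" using h0 by (simp add: eq_neg_iff_add_eq_0 add.commute)
      finally show ?thesis by (simp add: algebra_simps)
    qed
    have "fps_deriv (V ^ j) = fps_const (of_nat j) * fps_deriv V * V ^ i"
      by (simp only: fps_deriv_power Suc diff_Suc_1)
    also have "\<dots> = - (fps_const (of_nat j) * (V ^ (j + 1) * fps_deriv F))"
      by (simp only: Vd Suc power_Suc add_Suc_right add_0_right) (simp add: mult_ac)
    finally have Wd: "fps_deriv (V ^ j) = - (fps_const (of_nat j) * (V ^ (j + 1) * fps_deriv F))" .
    have c1: "fps_nth (V ^ (j + 1) * fps_deriv E) j = fps_nth (V ^ j) j + fps_nth (V ^ (j + 1) * fps_deriv F) i"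
      unfolding e1 fps_add_nth fps_X_mult_nth using Suc by simp
    have c2: "fps_nth (fps_deriv (V ^ j)) i = of_nat j * fps_nth (V ^ j) j"
      using Suc by (simp only: fps_deriv_nth Suc_eq_plus1)
    have "fps_nth (fps_deriv (V ^ j)) i = fps_nth (- (fps_const (of_nat j) * (V ^ (j + 1) * fps_deriv F))) i"
      by (simp only: Wd)
    then have c3: "fps_nth (fps_deriv (V ^ j)) i = - (of_nat j * fps_nth (V ^ (j + 1) * fps_deriv F) i)"
      by (simp only: fps_neg_nth fps_mult_left_const_nth)
    have aux: "of_nat j * X = 0" if "X = a + g" "d = of_nat j * a" "d = - (of_nat j * g)" for X a g d :: 'b
    proof -
      have "of_nat j * X = of_nat j * a + of_nat j * g" using that(1) by (simp add: distrib_left)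
      also have "\<dots> = d + - d" using that(2,3) by (metis add.commute add.inverse_inverse)
      finally show ?thesis by simp
    qed
    have "of_nat j * fps_nth (V ^ (j + 1) * fps_deriv E) j = 0"
      by (rule aux[OF c1 c2 c3])
    then show ?thesis using tf[of j] Suc by simp
  qed
qed

lemma lagrange:
  fixes t s :: "nat \<Rightarrow> 'b" and V :: "'b fps"
  assumes t1: "t 1 = 1" and s1: "s 1 = 1"
  and rec: "\<And>m. 2 \<le> m \<Longrightarrow> (\<Sum>k=1..m. bell_partial m k (\<lambda>j. of_nat j * t j) * of_nat k * s k) = 0"
  and V: "V * fps_shift 1 (EE t) = 1" and n: "1 \<le> n"
  shows "of_nat n * s n = of_nat (fact (n - 1)) * fps_nth (V ^ n) (n - 1)"
proof -
  define E where "E = EE t"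
  define F where "F = fps_shift 1 E"
  have VF: "V * F = 1" using V by (simp add: F_def E_def)
  have EF: "E = F * fps_X"
    by (rule fps_ext) (simp add: F_def E_def EE_def)
  define b where "b k = ifact k * of_nat k * s k" for k
  define T where "T = (\<Sum>k=0..n. fps_const (b k) * E ^ k)"
  have Tc: "fps_nth T m = (if m = 1 then 1 else 0)" if "m \<le> n" for m
    using comp_coeffs[OF t1 s1 rec that] by (simp add: T_def b_def E_def)
  define D where "D = fps_deriv T"
  have Dc: "fps_nth D j = (if j = 0 then 1 else 0)" if "j < n" for j
    using Tc[of "j + 1"] that by (simp add: D_def)
  have step1: "fps_nth (V ^ n * D) (n - 1) = fps_nth (V ^ n) (n - 1)"
  proof -
    have "fps_nth (V ^ n * D) (n - 1) = (\<Sum>i=0..n-1. fps_nth (V ^ n) i * fps_nth D (n - 1 - i))"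
      by (rule fps_mult_nth)
    also have "\<dots> = (\<Sum>i=0..n-1. if i = n - 1 then fps_nth (V ^ n) i else 0)"
      by (rule sum.cong[OF refl]) (use n in \<open>auto simp: Dc\<close>)
    also have "\<dots> = fps_nth (V ^ n) (n - 1)" by simp
    finally show ?thesis .
  qed
  have Dsum: "D = (\<Sum>k=0..n. fps_const (b k * of_nat k) * (fps_deriv E * E ^ (k - 1)))"
    by (simp add: D_def T_def fps_deriv_sum fps_deriv_power mult.assoc) (simp add: mult.assoc[symmetric])
  have trm: "fps_nth (V ^ n * (fps_const (b k * of_nat k) * (fps_deriv E * E ^ (k - 1)))) (n - 1)
      = (if k = n then b n * of_nat n else 0)" if k: "k \<in> {0..n}" for k
  proof (cases "k = 0")
    case True then show ?thesis using n by simp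
  next
    case False
    then have k1: "1 \<le> k" "k \<le> n" using k by auto
    have ne: "n = (n - k + 1) + (k - 1)" using k1 by simp
    have pw: "V ^ n = V ^ (n - k + 1) * V ^ (k - 1)"
      by (subst ne) (rule power_add)
    have VE: "V * E = fps_X" by (simp add: EF mult.assoc[symmetric] VF)
    have "V ^ (k - 1) * E ^ (k - 1) = fps_X ^ (k - 1)"
      by (simp only: power_mult_distrib[symmetric] VE)
    then have eq: "V ^ n * (fps_deriv E * E ^ (k - 1)) = fps_X ^ (k - 1) * (V ^ (n - k + 1) * fps_deriv E)"
      by (simp add: pw algebra_simps)
    define G where "G = V ^ (n - k + 1) * fps_deriv E"
    define c where "c = b k * of_nat k"
    have "V ^ n * (fps_const c * (fps_deriv E * E ^ (k - 1))) = fps_const c * (V ^ n * (fps_deriv E * E ^ (k - 1)))"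
      by (rule mult.left_commute)
    also have "\<dots> = fps_const c * (fps_X ^ (k - 1) * G)" by (simp only: eq G_def)
    finally have eq2: "V ^ n * (fps_const c * (fps_deriv E * E ^ (k - 1))) = fps_const c * (fps_X ^ (k - 1) * G)" .
    have "fps_nth (fps_const c * (fps_X ^ (k - 1) * G)) (n - 1) = c * fps_nth G (n - k)"
      using k1 by (simp only: fps_mult_left_const_nth fps_X_power_mult_nth) simp
    then have "fps_nth (V ^ n * (fps_const (b k * of_nat k) * (fps_deriv E * E ^ (k - 1)))) (n - 1)
        = b k * of_nat k * fps_nth (V ^ (n - k + 1) * fps_deriv E) (n - k)"
      using eq2 by (simp only: c_def G_def)
    also have "\<dots> = (if k = n then b n * of_nat n else 0)"
      using Cj[OF VF EF, of "n - k"] k1 by auto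
    finally show ?thesis .
  qed
  have "fps_nth (V ^ n * D) (n - 1) = (\<Sum>k=0..n. if k = n then b n * of_nat n else 0)"
    unfolding Dsum sum_distrib_left fps_sum_nth using trm by (rule sum.cong[OF refl])
  also have "\<dots> = b n * of_nat n" by simp
  finally have vn: "fps_nth (V ^ n) (n - 1) = b n * of_nat n" using step1 by simp
  have fn: "fact n = fact (n - 1) * (n::nat)" using n by (cases n) auto
  have "of_nat (fact (n - 1)) * fps_nth (V ^ n) (n - 1) = (ifact n * of_nat (fact (n - 1) * n)) * (of_nat n * s n)"
    unfolding vn b_def by (simp add: algebra_simps)
  also have "\<dots> = of_nat n * s n" using ifa[of n] by (simp only: fn[symmetric]) simp
  finally show ?thesis by simp
qed

end




lemma product_composition_lemma':
  assumes c0: "fps_nth c 0 = (0::'a::comm_ring_1)"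
    and d0: "fps_nth d 0 = 0"
  shows "fps_nth ((a oo c) * (b oo d)) n =
    sum (\<lambda>(k,m). fps_nth a k * fps_nth b m * fps_nth (c^k * d^m) n) {(k,m). k + m \<le> n}"  (is "?l = ?r")
proof -
  let ?S = "{(k::nat, m::nat). k + m \<le> n}"
  have s: "?S \<subseteq> {0..n} \<times> {0..n}" by (simp add: subset_eq)
  have f: "finite {(k::nat, m::nat). k + m \<le> n}"
    by (auto intro: finite_subset[OF s])
  have "?r = (\<Sum>(k, m) \<in> {(k, m). k + m \<le> n}. \<Sum>j = 0..n. fps_nth a k * fps_nth b m * (fps_nth (c ^ k) j * fps_nth (d ^ m) (n - j)))"
    by (simp add: fps_mult_nth sum_distrib_left)
  also have "\<dots> = (\<Sum>i = 0..n. \<Sum>(k,m)\<in>{(k,m). k+m \<le> n}. fps_nth a k * fps_nth (c ^ k) i * fps_nth b m * fps_nth (d ^ m) (n-i))"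
    unfolding sum.swap [where A = "{0..n}"] by (auto simp add: field_simps intro: sum.cong)
  also have "... = (\<Sum>i = 0..n.
                    \<Sum>q = 0..i. \<Sum>j = 0..n - i. fps_nth a q * fps_nth (c ^ q) i * (fps_nth b j * fps_nth (d ^ j) (n - i)))"
    apply (rule sum.cong [OF refl])
    apply (simp add: sum.cartesian_product mult.assoc)
    apply (rule sum.mono_neutral_right[OF f], force)
    by clarsimp (metis c0 d0 leI startsby_zero_power_prefix mult_not_zero)+
  also have "\<dots> = ?l"
    by (simp add: fps_mult_nth fps_compose_nth sum_product)
  finally show ?thesis by simp
qed

lemma fps_compose_mult_distrib':
  assumes c0: "fps_nth c 0 = (0::'a::comm_ring_1)"
  shows "(a * b) oo c = (a oo c) * (b oo c)"
proof (rule fps_ext)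
  fix n
  have "fps_nth ((a oo c) * (b oo c)) n = sum (\<lambda>s. sum (\<lambda>i. fps_nth a i * fps_nth b (s - i) * fps_nth (c^s) n) {0..s}) {0..n}"
    unfolding product_composition_lemma'[OF c0 c0] power_add[symmetric]
    unfolding sum_pair_less_iff[where a = "\<lambda>k. fps_nth a k" and b="\<lambda>m. fps_nth b m" and c="\<lambda>s. fps_nth (c ^ s) n" and n = n] ..
  also have "\<dots> = fps_nth ((a * b) oo c) n"
    by (simp add: fps_compose_nth fps_mult_nth sum_distrib_right)
  finally show "fps_nth ((a * b) oo c) n = fps_nth ((a oo c) * (b oo c)) n" by simp
qed

lemma fps_compose_power':
  assumes c0: "fps_nth c 0 = (0::'a::comm_ring_1)"
  shows "(a oo c)^n = a^n oo c"
  by (induction n) (simp_all add: fps_compose_mult_distrib'[OF c0])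

definition PP :: "nat \<Rightarrow> 'a::comm_ring_1 fps" where
  "PP n = Abs_fps (\<lambda>k. (-1)^k * of_nat ((n + k - 1) choose k))"

lemma PP_step: "PP (Suc n) * (1 + fps_X) = (PP n :: 'a::comm_ring_1 fps)"
proof (rule fps_ext)
  fix k
  show "fps_nth (PP (Suc n) * (1 + fps_X)) k = fps_nth (PP n :: 'a fps) k"
  proof (cases k)
    case 0 then show ?thesis by (simp add: PP_def distrib_left)
  next
    case (Suc j)
    have "fps_nth (PP (Suc n) * (1 + fps_X)) k = fps_nth (PP (Suc n) :: 'a fps) (Suc j) + fps_nth (PP (Suc n)) j"
      by (simp add: distrib_left Suc)
    also have "\<dots> = (-1)^(Suc j) * (of_nat (Suc (n + j) choose Suc j) - of_nat (n + j choose j))"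
      by (simp add: PP_def algebra_simps)
    also have "of_nat (Suc (n + j) choose Suc j) - of_nat (n + j choose j) = (of_nat (n + j choose Suc j) :: 'a)"
      by (simp add: binomial_Suc_Suc)
    finally show ?thesis by (simp add: PP_def Suc)
  qed
qed

lemma PP_inv: "PP n * (1 + fps_X) ^ n = (1 :: 'a::comm_ring_1 fps)"
proof (induction n)
  case 0
  show ?case
  proof (rule fps_ext)
    fix k show "fps_nth (PP 0 * (1 + fps_X) ^ 0) k = fps_nth (1 :: 'a fps) k"
      by (cases k) (simp_all add: PP_def binomial_eq_0)
  qed
next
  case (Suc n)
  have "PP (Suc n) * (1 + fps_X) ^ Suc n = (PP (Suc n) * (1 + fps_X)) * (1 + fps_X) ^ n"
    by (simp add: algebra_simps)
  also have "\<dots> = (1 :: 'a fps)" by (simp only: PP_step Suc.IH)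
  finally show ?case .
qed

lemma choose_fact_ffall: "(m choose i) * fact i = ffall m i"
proof (induction m arbitrary: i)
  case 0
  then show ?case by (cases i) (auto simp: ffall_def lessThan_Suc_eq_insert_0)
next
  case (Suc m)
  show ?case
  proof (cases i)
    case 0 then show ?thesis by (simp add: ffall_def)
  next
    case (Suc j)
    have "(Suc m choose Suc j) * fact (Suc j) = ((Suc m choose Suc j) * Suc j) * fact j"
      by (simp add: algebra_simps)
    also have "\<dots> = Suc m * ((m choose j) * fact j)"
      by (simp only: Suc_times_binomial_eq[symmetric])
    also have "\<dots> = Suc m * ffall m j" using Suc.IH by simp
    also have "\<dots> = ffall (Suc m) (Suc j)"
      unfolding ffall_def prod.lessThan_Suc_shift by simp
    finally show ?thesis using Suc by simp
  qed
qed




context lagr begin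

lemma ifact_Suc: "ifact (Suc j) * of_nat (Suc j) = ifact j"
proof -
  have "ifact j = ifact j * (ifact (Suc j) * of_nat (fact (Suc j)))" by (simp only: ifa mult_1_right)
  also have "\<dots> = (ifact (Suc j) * of_nat (Suc j)) * (ifact j * of_nat (fact j))"
    by (simp add: algebra_simps)
  finally show ?thesis using ifa by simp
qed

lemma negbin:
  fixes t :: "nat \<Rightarrow> 'b"
  assumes t1: "t 1 = 1" and n: "2 \<le> n"
  shows "(PP n oo (fps_shift 1 (EE t) - 1)) * fps_shift 1 (EE t) ^ n = 1"
  and "of_nat (fact (n - 1)) * fps_nth (PP n oo (fps_shift 1 (EE t) - 1)) (n - 1)
        = (\<Sum>k=1..n-1. (-1)^k * of_nat (ffall (n + k - 1) k) * bell_partial (n - 1) k (\<lambda>j. t (j + 1)))"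
proof -
  define F where "F = fps_shift 1 (EE t)"
  define u where "u = F - 1"
  have F0: "fps_nth F 0 = 1" using t1 ifact1 by (simp add: F_def EE_def)
  have u0: "fps_nth u 0 = 0" using F0 by (simp add: u_def)
  have Fu: "(1 + fps_X) oo u = F"
    by (simp only: fps_compose_add_distrib fps_compose_1 fps_X_fps_compose_startby0[OF u0]) (simp add: u_def)
  have "(PP n oo u) * F ^ n = (PP n oo u) * ((1 + fps_X) ^ n oo u)"
    by (simp only: Fu[symmetric] fps_compose_power'[OF u0])
  also have "\<dots> = (PP n * (1 + fps_X) ^ n) oo u"
    by (simp only: fps_compose_mult_distrib'[OF u0])
  also have "\<dots> = 1" by (simp add: PP_inv)
  finally show "(PP n oo (fps_shift 1 (EE t) - 1)) * fps_shift 1 (EE t) ^ n = 1"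
    by (simp add: u_def F_def)
  have ueq: "u = Abs_fps (\<lambda>j. if j = 0 then 0 else ifact j * t (j + 1))"
  proof (rule fps_ext)
    fix j show "fps_nth u j = fps_nth (Abs_fps (\<lambda>j. if j = 0 then 0 else ifact j * t (j + 1))) j"
    proof (cases j)
      case 0 then show ?thesis using u0 by simp
    next
      case (Suc i)
      have "fps_nth u j = ifact (Suc j) * (of_nat (Suc j) * t (Suc j))"
        using Suc by (simp add: u_def F_def EE_def)
      also have "\<dots> = (ifact (Suc j) * of_nat (Suc j)) * t (Suc j)" by (simp add: algebra_simps)
      also have "\<dots> = ifact j * t (j + 1)" by (simp only: ifact_Suc flip: Suc_eq_plus1)
      finally show ?thesis using Suc by simp
    qed
  qed
  have key: "of_nat (fact m) * fps_nth (u ^ i) m = of_nat (fact i) * bell_partial m i (\<lambda>j. t (j + 1))" for m i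
    unfolding ueq by (rule bell_egf[OF ifa])
  define m where "m = n - 1"
  have m1: "1 \<le> m" using n by (simp add: m_def)
  have "of_nat (fact m) * fps_nth (PP n oo u) m
      = (\<Sum>i=0..m. (-1)^i * of_nat ((n + i - 1) choose i) * (of_nat (fact m) * fps_nth (u ^ i) m))"
    by (simp add: fps_compose_nth sum_distrib_left PP_def algebra_simps)
  also have "\<dots> = (\<Sum>i=0..m. (-1)^i * of_nat (ffall (n + i - 1) i) * bell_partial m i (\<lambda>j. t (j + 1)))"
    by (simp add: key choose_fact_ffall[symmetric] algebra_simps)
  also have "\<dots> = (\<Sum>i=1..m. (-1)^i * of_nat (ffall (n + i - 1) i) * bell_partial m i (\<lambda>j. t (j + 1)))"
  proof -
    have "bell_partial m 0 (\<lambda>j. t (j + 1)) = 0" using m1 bell_Suc_0[of "m - 1"] by simp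
    then show ?thesis by (simp add: sum.atLeast_Suc_atMost)
  qed
  finally show "of_nat (fact (n - 1)) * fps_nth (PP n oo (fps_shift 1 (EE t) - 1)) (n - 1)
        = (\<Sum>k=1..n-1. (-1)^k * of_nat (ffall (n + k - 1) k) * bell_partial (n - 1) k (\<lambda>j. t (j + 1)))"
    by (simp add: m_def u_def F_def)
qed

end




lemma Cst_mult: "Cst a * Cst b = (Cst (a * b) :: ('m::monoid_add \<Rightarrow>\<^sub>0 'a::comm_ring_1))"
  by (simp add: Cst_def mult_single)

lemma Cst_add: "Cst (a + b) = (Cst a + Cst b :: ('m::monoid_add \<Rightarrow>\<^sub>0 'a::comm_ring_1))"
  by (simp add: Cst_def single_add)

lemma Cst_0 [simp]: "Cst 0 = 0" by (simp add: Cst_def)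

lemma Cst_1 [simp]: "Cst 1 = (1 :: ('m::monoid_add \<Rightarrow>\<^sub>0 'a::comm_ring_1))"
  by (simp add: Cst_def)

lemma Cst_of_nat: "Cst (of_nat k) = (of_nat k :: ('m::monoid_add \<Rightarrow>\<^sub>0 'a::comm_ring_1))"
  by (simp add: Cst_def)

lemma lookup_Cst_mult: "Poly_Mapping.lookup (Cst c * q) x = c * Poly_Mapping.lookup (q :: ('m::monoid_add \<Rightarrow>\<^sub>0 'a::comm_ring_1)) x"
proof -
  have "Cst c * q = Poly_Mapping.map ((*) c) q" by (simp add: Cst_def mult_map_scale_conv_mult)
  then show ?thesis by (simp add: map.rep_eq when_def)
qed

lemma sum_singles: "(\<Sum>k\<in>Poly_Mapping.keys p. Poly_Mapping.single k (Poly_Mapping.lookup p k)) = p"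
  by (rule poly_mapping_eqI) (simp add: lookup_sum lookup_single when_def in_keys_iff)

lemma conv_single:
  "conv_app T S (Poly_Mapping.single ab c) = Cst c * T (Poly_Mapping.single (fst ab) 1) * S (Poly_Mapping.single (snd ab) 1)"
  by (cases "c = 0") (simp_all add: conv_app_def)

lemma conv_add: "conv_app T S (q1 + q2) = conv_app T S q1 + conv_app T S q2"
  unfolding conv_app_def
  by (rule setsum_keys_plus_distrib) (simp_all add: Cst_add algebra_simps)

lemma conv_zero: "conv_app T S 0 = 0"
  by (simp add: conv_app_def)

lemma conv_sum: "conv_app T S (\<Sum>i\<in>I. f i) = (\<Sum>i\<in>I. conv_app T S (f i))"
proof (induction I rule: infinite_finite_induct)
  case (infinite A) then show ?case by (simp add: conv_zero)
next
  case empty then show ?case by (simp add: conv_zero)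
next
  case (insert x F) then show ?case by (simp add: conv_add)
qed

lemma conv_expand: "conv_app T S q = (\<Sum>ab\<in>Poly_Mapping.keys q. conv_app T S (Poly_Mapping.single ab (Poly_Mapping.lookup q ab)))"
  unfolding conv_single by (simp add: conv_app_def)

lemma conv_Cst: "conv_app T S (Cst c * q) = Cst c * conv_app T S q"
proof -
  have "Cst c * q = (\<Sum>ab\<in>Poly_Mapping.keys q. Poly_Mapping.single ab (c * Poly_Mapping.lookup q ab))"
    by (rule poly_mapping_eqI) (simp add: lookup_Cst_mult lookup_sum lookup_single when_def in_keys_iff)
  then have "conv_app T S (Cst c * q) = (\<Sum>ab\<in>Poly_Mapping.keys q. conv_app T S (Poly_Mapping.single ab (c * Poly_Mapping.lookup q ab)))"
    by (simp add: conv_sum)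
  also have "\<dots> = Cst c * (\<Sum>ab\<in>Poly_Mapping.keys q. conv_app T S (Poly_Mapping.single ab (Poly_Mapping.lookup q ab)))"
    by (simp add: conv_single sum_distrib_left Cst_mult[symmetric] algebra_simps)
  also have "\<dots> = Cst c * conv_app T S q" by (simp only: conv_expand[symmetric])
  finally show ?thesis .
qed

lemma lin_expand:
  assumes "is_linear_NE S" "finite K" "Poly_Mapping.keys p \<subseteq> K"
  shows "S p = (\<Sum>m\<in>K. Cst (Poly_Mapping.lookup p m) * S (Poly_Mapping.single m 1))"
proof -
  have "S p = (\<Sum>m\<in>Poly_Mapping.keys p. Cst (Poly_Mapping.lookup p m) * S (Poly_Mapping.single m 1))"
    using assms(1) unfolding is_linear_NE_def by blast
  also have "\<dots> = (\<Sum>m\<in>K. Cst (Poly_Mapping.lookup p m) * S (Poly_Mapping.single m 1))"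
    by (rule sum.mono_neutral_left) (use assms in \<open>auto simp: in_keys_iff\<close>)
  finally show ?thesis .
qed

lemma S_Cst:
  assumes "is_linear_NE S"
  shows "S (Cst c * p) = Cst c * S p"
proof -
  have sub: "Poly_Mapping.keys (Cst c * p) \<subseteq> Poly_Mapping.keys p" by (auto simp: in_keys_iff lookup_Cst_mult)
  have "S (Cst c * p) = (\<Sum>m\<in>Poly_Mapping.keys p. Cst (Poly_Mapping.lookup (Cst c * p) m) * S (Poly_Mapping.single m 1))"
    by (rule lin_expand[OF assms finite_keys sub])
  also have "\<dots> = Cst c * (\<Sum>m\<in>Poly_Mapping.keys p. Cst (Poly_Mapping.lookup p m) * S (Poly_Mapping.single m 1))"
    by (simp only: lookup_Cst_mult Cst_mult[symmetric] sum_distrib_left mult.assoc)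
  also have "\<dots> = Cst c * S p"
  proof -
    have e: "S p = (\<Sum>m\<in>Poly_Mapping.keys p. Cst (Poly_Mapping.lookup p m) * S (Poly_Mapping.single m 1))"
      by (rule lin_expand[OF assms finite_keys subset_refl])
    show ?thesis by (simp only: e[symmetric])
  qed
  finally show ?thesis .
qed

lemma tens_conv:
  assumes lin: "is_linear_NE S"
  shows "conv_app id S (tens p q) = p * S q"
proof -
  have "conv_app id S (tens p q) = (\<Sum>a\<in>Poly_Mapping.keys p. \<Sum>b\<in>Poly_Mapping.keys q. Cst (Poly_Mapping.lookup p a * Poly_Mapping.lookup q b) * Poly_Mapping.single a 1 * S (Poly_Mapping.single b 1))"
    by (simp add: tens_def conv_sum conv_single)
  also have "\<dots> = (\<Sum>a\<in>Poly_Mapping.keys p. Poly_Mapping.single a (Poly_Mapping.lookup p a)) * (\<Sum>b\<in>Poly_Mapping.keys q. Cst (Poly_Mapping.lookup q b) * S (Poly_Mapping.single b 1))"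
  proof -
    have pt: "Cst (x * y) * Poly_Mapping.single a 1 = Poly_Mapping.single a x * Cst y" for x y :: "'c::comm_ring_1" and a :: "'m::comm_monoid_add"
      by (simp add: Cst_def mult_single)
    show ?thesis unfolding sum_product
      by (intro sum.cong refl) (simp only: pt mult.assoc)
  qed
  also have "\<dots> = p * S q"
  proof -
    have "S q = (\<Sum>b\<in>Poly_Mapping.keys q. Cst (Poly_Mapping.lookup q b) * S (Poly_Mapping.single b 1))"
      using lin unfolding is_linear_NE_def by blast
    then show ?thesis by (simp only: sum_singles)
  qed
  finally show ?thesis .
qed




lemma ifa_NE: "Cst (1 / fact m) * of_nat (fact m) = (1 :: 'a::field_char_0 NE)"
proof -
  have "Cst (1 / fact m) * of_nat (fact m) = (Cst (1 / fact m * of_nat (fact m)) :: 'a NE)"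
    by (simp only: Cst_of_nat[symmetric] Cst_mult)
  also have "(1 / fact m * of_nat (fact m) :: 'a) = 1" by (simp add: of_nat_fact)
  finally show ?thesis by simp
qed

lemma Cst_inv_cancel:
  assumes "(m::nat) > 0" "Cst (1 / of_nat m) * X = (0 :: 'a::field_char_0 NE)"
  shows "X = 0"
proof -
  have "Cst (of_nat m) * Cst (1 / of_nat m) = (1 :: 'a NE)"
    using assms(1) by (simp add: Cst_mult)
  then have "X = Cst (of_nat m) * (Cst (1 / of_nat m) * X)" by (simp add: mult.assoc[symmetric])
  then show ?thesis using assms(2) by simp
qed

lemma Delta_one: "Delta (1 :: 'a::field_char_0 NE) = 1"
  by (simp add: Delta_def)

lemma S_one:
  assumes "is_antipode (S :: 'a::field_char_0 NE \<Rightarrow> 'a NE)"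
  shows "S 1 = 1"
proof -
  have c: "conv_app id S (Delta 1) = Cst (counit 1)" using assms unfolding is_antipode_def by blast
  have "conv_app id S (Delta 1) = S 1"
  proof -
    have "(1 :: 'a NE2) = Poly_Mapping.single 0 1" by simp
    then have "conv_app id S (Delta 1) = conv_app id S (Poly_Mapping.single 0 1)"
      by (simp add: Delta_one)
    also have "\<dots> = S 1" by (simp add: conv_single zero_prod_def)
    finally show ?thesis .
  qed
  then show ?thesis using c by (simp add: counit_def)
qed

lemma Delta_tgen:
  assumes "2 \<le> m"
  shows "Delta (tgen m :: 'a::field_char_0 NE) = Delta_gen m"
proof -
  have "Suc (Suc (m - 2)) = m" using assms by arith
  then show ?thesis using assms by (simp add: Delta_def tgen_def)
qed

lemma counit_tgen:
  assumes "2 \<le> m"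
  shows "counit (tgen m :: 'a::field_char_0 NE) = 0"
proof -
  have ne: "Poly_Mapping.single (m - 2) (1::nat) \<noteq> 0"
  proof
    assume "Poly_Mapping.single (m - 2) (1::nat) = 0"
    then have "Poly_Mapping.lookup (Poly_Mapping.single (m - 2) (1::nat)) (m - 2) = Poly_Mapping.lookup 0 (m - 2)" by simp
    then show False by simp
  qed
  then show ?thesis using assms by (simp add: counit_def tgen_def lookup_single when_def)
qed

lemma rec_NE:
  assumes anti: "is_antipode (S :: 'a::field_char_0 NE \<Rightarrow> 'a NE)" and m: "2 \<le> m"
  shows "(\<Sum>k=1..m. bell_partial m k (\<lambda>j. of_nat j * tgen j) * of_nat k * S (tgen k)) = 0"
proof -
  have lin: "is_linear_NE S" using anti unfolding is_antipode_def by blast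
  have c: "conv_app id S (Delta (tgen m)) = Cst (counit (tgen m))" using anti unfolding is_antipode_def by blast
  have e1: "conv_app id S (Delta (tgen m)) =
     Cst (1 / of_nat m) * (\<Sum>k=1..m. bell_partial m k (\<lambda>j. Cst (of_nat j) * tgen j) * (Cst (of_nat k) * S (tgen k)))"
    by (simp only: Delta_tgen[OF m] Delta_gen_def conv_Cst conv_sum tens_conv[OF lin] S_Cst[OF lin])
  then have "Cst (1 / of_nat m) * (\<Sum>k=1..m. bell_partial m k (\<lambda>j. Cst (of_nat j) * tgen j) * (Cst (of_nat k) * S (tgen k))) = (0 :: 'a NE)"
    using c e1 counit_tgen[OF m] Cst_0 by metis
  then have "(\<Sum>k=1..m. bell_partial m k (\<lambda>j. Cst (of_nat j) * tgen j) * (Cst (of_nat k) * S (tgen k))) = (0 :: 'a NE)"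
    by (rule Cst_inv_cancel[rotated]) (use m in simp)
  then show ?thesis by (simp add: Cst_of_nat mult.assoc)
qed




lemma Fser_eq: "Fser = fps_shift 1 (EI :: 'a::field_char_0 NE fps)"
proof (rule fps_ext)
  fix j
  show "fps_nth Fser j = fps_nth (fps_shift 1 (EI :: 'a NE fps)) j"
  proof (cases j)
    case 0 then show ?thesis by (simp add: Fser_def EI_def)
  next
    case (Suc i)
    have a: "(fact (Suc j) :: 'a) = of_nat (Suc j) * fact j" by (rule fact_Suc)
    have b: "(of_nat (Suc j) :: 'a) \<noteq> 0" by (rule of_nat_neq_0)
    have "(of_nat (Suc j) / fact (Suc j) :: 'a) = 1 / fact j"
      by (simp only: a nonzero_divide_mult_cancel_left[OF b])
    then show ?thesis using Suc by (simp add: Fser_def EI_def)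
  qed
qed

theorem mainTheorem6:
  fixes S :: "'a::field_char_0 NE \<Rightarrow> 'a NE" and n :: nat
  assumes "is_antipode S" and "2 \<le> n"
  shows "of_nat n * S (tgen n) =
           (\<Sum>k = 1..n - 1. (-1) ^ k * of_nat (ffall (n + k - 1) k)
                               * bell_partial (n - 1) k (\<lambda>j. tgen (j + 1)))
       \<and> (\<exists>G. G * Fser ^ n = 1 \<and> of_nat n * S (tgen n) = fact (n - 1) * fps_nth G (n - 1))
       \<and> (\<exists>G. G * (fps_shift 1 EI) ^ n = 1 \<and> of_nat n * S (tgen n) = fact (n - 1) * fps_nth G (n - 1))"
proof -
  interpret L: lagr "\<lambda>m. Cst (1 / fact m) :: 'a NE"
    by unfold_locales (rule ifa_NE)
  have t1: "tgen 1 = (1 :: 'a NE)" by (simp add: tgen_def)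
  have s1: "S (tgen 1) = 1" using S_one[OF assms(1)] t1 by simp
  have rec: "\<And>m. 2 \<le> m \<Longrightarrow> (\<Sum>k=1..m. bell_partial m k (\<lambda>j. of_nat j * tgen j) * of_nat k * S (tgen k)) = 0"
    by (rule rec_NE[OF assms(1)])
  have EE_EI: "L.EE tgen = EI"
  proof (rule fps_ext)
    fix j
    show "fps_nth (L.EE tgen) j = fps_nth (EI :: 'a NE fps) j"
    proof (cases "j = 0 \<or> j = 1")
      case True then show ?thesis
        by (auto simp: L.EE_def EI_def tgen_def)
    next
      case False
      then have j2: "2 \<le> j" by auto
      have "fps_nth (L.EE tgen) j = Cst (1 / fact j) * (of_nat j * tgen j)"
        using j2 by (simp add: L.EE_def)
      also have "\<dots> = (Cst (1 / fact j) * Cst (of_nat j)) * tgen j"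
        by (simp add: Cst_of_nat mult.assoc)
      also have "\<dots> = Cst (of_nat j / fact j) * tgen j" by (simp add: Cst_mult)
      also have "\<dots> = fps_nth (EI :: 'a NE fps) j" using j2 by (simp add: EI_def)
      finally show ?thesis .
    qed
  qed
  define F where "F = fps_shift 1 (L.EE tgen)"
  have FEI: "F = fps_shift 1 EI" by (simp add: F_def EE_EI)
  define G where "G = PP n oo (F - 1)"
  have GF: "G * F ^ n = 1" using L.negbin(1)[where t=tgen and n=n, OF t1 assms(2)] by (simp add: G_def F_def)
  have Gc: "of_nat (fact (n - 1)) * fps_nth G (n - 1)
        = (\<Sum>k=1..n-1. (-1)^k * of_nat (ffall (n + k - 1) k) * bell_partial (n - 1) k (\<lambda>j. tgen (j + 1)))"
    using L.negbin(2)[where t=tgen and n=n, OF t1 assms(2)] by (simp add: G_def F_def)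
  define V where "V = G * F ^ (n - 1)"
  have VF: "V * F = 1"
  proof -
    have "V * F = G * (F ^ (n - 1) * F)" by (simp add: V_def mult.assoc)
    also have "F ^ (n - 1) * F = F ^ n" using assms(2)
      by (metis One_nat_def Suc_diff_1 le_trans one_le_numeral power_Suc2 Suc_le_lessD)
    finally show ?thesis using GF by simp
  qed
  have VG: "V ^ n = G"
  proof -
    have VnFn: "V ^ n * F ^ n = 1" by (simp add: power_mult_distrib[symmetric] VF)
    have "G = G * (V ^ n * F ^ n)" by (simp add: VnFn)
    also have "\<dots> = V ^ n * (G * F ^ n)" by (simp add: algebra_simps)
    finally show ?thesis using GF by simp
  qed
  have lag: "of_nat n * S (tgen n) = of_nat (fact (n - 1)) * fps_nth (V ^ n) (n - 1)"
    using L.lagrange[of tgen "\<lambda>k. S (tgen k)" V n] t1 s1 rec VF assms(2) by (simp add: F_def)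
  have main: "of_nat n * S (tgen n) = fact (n - 1) * fps_nth G (n - 1)"
    using lag VG by (simp add: of_nat_fact)
  show ?thesis
  proof (intro conjI exI)
    show "of_nat n * S (tgen n) =
           (\<Sum>k = 1..n - 1. (-1) ^ k * of_nat (ffall (n + k - 1) k)
                               * bell_partial (n - 1) k (\<lambda>j. tgen (j + 1)))"
      using lag VG Gc by simp
    show "G * Fser ^ n = 1" by (simp only: Fser_eq FEI[symmetric] GF)
    show "G * fps_shift 1 EI ^ n = 1" using GF FEI by simp
  qed (use main in auto)
qed



end
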